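(* The cone of (coarse) Hilbert functions of finitely generated squarefree $\mathbb{N}^n$-graded $S$-modules generated in degree zero equals the cone of (coarse) Hilbert functions of Stanley–Reisner rings $\mathbb{k}[\Delta]=S/I_\Delta$ of simplicial complexes $\Delta$ on $[n]$.
   Context: $S=\mathbb{k}[x_1,\dots,x_n]$ with fine $\mathbb{N}^n$-grading. A module $M$ is squarefree if for all $a\in\mathbb{N}^n$ and $i$ with $a_i\neq0$, multiplication by $x_i:M_a\to M_{a+e_i}$ is bijective. The coarse Hilbert function is $H_M(i)=\dim_{\mathbb{k}}\bigoplus_{|a|=i}M_a$. The cone of Hilbert functions of a family of modules is the convex cone in $\mathbb{R}^{\mathbb{N}}$ spanned by their Hilbert functions. *)

theory Defs
  imports "Jordan_Normal_Form.Matrix"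
begin

text \<open>Fine-graded modules over S = k[x_0,...,x_{n-1}] are encoded as families of
finite-dimensional k-vector spaces M_a = k^(dimf M a), a in N^n, together with the linear
maps x_i : M_a -> M_{a+e_i} (given as matrices) which pairwise commute.\<close>

record 'k grmod =
  dimf :: "(nat \<Rightarrow> nat) \<Rightarrow> nat"
  mulx :: "nat \<Rightarrow> (nat \<Rightarrow> nat) \<Rightarrow> 'k mat"

definition degrees :: "nat \<Rightarrow> (nat \<Rightarrow> nat) set" where
  "degrees n = {a. \<forall>i\<ge>n. a i = 0}"

definition shift :: "(nat \<Rightarrow> nat) \<Rightarrow> nat \<Rightarrow> (nat \<Rightarrow> nat)" where
  "shift a i = a(i := a i + 1)"

definition graded_module :: "nat \<Rightarrow> 'k::field grmod \<Rightarrow> bool" where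
  "graded_module n M \<longleftrightarrow>
     (\<forall>a\<in>degrees n. \<forall>i<n. mulx M i a \<in> carrier_mat (dimf M (shift a i)) (dimf M a)) \<and>
     (\<forall>a\<in>degrees n. \<forall>i<n. \<forall>j<n.
        mulx M j (shift a i) * mulx M i a = mulx M i (shift a j) * mulx M j a)"

definition squarefree_mod :: "nat \<Rightarrow> 'k::field grmod \<Rightarrow> bool" where
  "squarefree_mod n M \<longleftrightarrow>
     (\<forall>a\<in>degrees n. \<forall>i<n. a i \<noteq> 0 \<longrightarrow>
        bij_betw (\<lambda>v. mulx M i a *\<^sub>v v) (carrier_vec (dimf M a)) (carrier_vec (dimf M (shift a i))))"

text \<open>The graded submodule generated by the degree-zero component M_0.\<close>
inductive gen0 :: "nat \<Rightarrow> 'k::field grmod \<Rightarrow> (nat \<Rightarrow> nat) \<Rightarrow> 'k vec \<Rightarrow> bool"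
  for n M where
  base: "v \<in> carrier_vec (dimf M (\<lambda>_. 0)) \<Longrightarrow> gen0 n M (\<lambda>_. 0) v"
| zero: "a \<in> degrees n \<Longrightarrow> gen0 n M a (0\<^sub>v (dimf M a))"
| add: "gen0 n M a v \<Longrightarrow> gen0 n M a w \<Longrightarrow> gen0 n M a (v + w)"
| smult: "gen0 n M a v \<Longrightarrow> gen0 n M a (c \<cdot>\<^sub>v v)"
| mult: "gen0 n M a v \<Longrightarrow> i < n \<Longrightarrow> gen0 n M (shift a i) (mulx M i a *\<^sub>v v)"

definition generated_in_degree_zero :: "nat \<Rightarrow> 'k::field grmod \<Rightarrow> bool" where
  "generated_in_degree_zero n M \<longleftrightarrow>
     (\<forall>a\<in>degrees n. \<forall>v\<in>carrier_vec (dimf M a). gen0 n M a v)"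

definition hilb :: "nat \<Rightarrow> 'k grmod \<Rightarrow> nat \<Rightarrow> real" where
  "hilb n M i = real (\<Sum>a\<in>{a\<in>degrees n. (\<Sum>j<n. a j) = i}. dimf M a)"

definition simplicial_complex :: "nat \<Rightarrow> nat set set \<Rightarrow> bool" where
  "simplicial_complex n \<Delta> \<longleftrightarrow> \<Delta> \<noteq> {} \<and> (\<forall>F\<in>\<Delta>. F \<subseteq> {0..<n}) \<and>
     (\<forall>F\<in>\<Delta>. \<forall>G. G \<subseteq> F \<longrightarrow> G \<in> \<Delta>)"

definition supp :: "(nat \<Rightarrow> nat) \<Rightarrow> nat set" where
  "supp a = {i. a i \<noteq> 0}"

text \<open>The Stanley--Reisner ring k[Delta] = S/I_Delta, with its monomial k-basis:
M_a = k if supp a is a face, 0 otherwise; x_i acts as identity between nonzero components.\<close>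
definition SR_dim :: "nat \<Rightarrow> nat set set \<Rightarrow> (nat \<Rightarrow> nat) \<Rightarrow> nat" where
  "SR_dim n \<Delta> a = (if a \<in> degrees n \<and> supp a \<in> \<Delta> then 1 else 0)"

definition stanley_reisner :: "nat \<Rightarrow> nat set set \<Rightarrow> 'k::field grmod" where
  "stanley_reisner n \<Delta> =
     \<lparr> dimf = SR_dim n \<Delta>,
       mulx = (\<lambda>i a. if SR_dim n \<Delta> a = 1 \<and> SR_dim n \<Delta> (shift a i) = 1 then 1\<^sub>m 1
                     else 0\<^sub>m (SR_dim n \<Delta> (shift a i)) (SR_dim n \<Delta> a)) \<rparr>"

definition cone_span :: "(nat \<Rightarrow> real) set \<Rightarrow> (nat \<Rightarrow> real) set" where
  "cone_span H = {f. \<exists>T c. finite T \<and> T \<subseteq> H \<and> (\<forall>h\<in>T. c h \<ge> 0) \<and>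
                        f = (\<lambda>i. \<Sum>h\<in>T. c h * h i)}"

end

theory Submission
  imports Defs "Jordan_Normal_Form.Determinant"
begin


lemma inj_dim_le:
  fixes A :: "'k::field mat"
  assumes A: "A \<in> carrier_mat q p"
    and inj: "\<And>v. v \<in> carrier_vec p \<Longrightarrow> A *\<^sub>v v = 0\<^sub>v q \<Longrightarrow> v = 0\<^sub>v p"
  shows "p \<le> q"
proof (rule ccontr)
  assume "\<not> p \<le> q"
  hence qp: "q < p" by simp
  define c where "c = (\<lambda>i. if i < q then row A i else 0\<^sub>v p)"
  define B where "B = mat\<^sub>r p p (\<lambda>i. if i = p - 1 then 0\<^sub>v p else c i)"
  have c: "c \<in> {0..<p} \<rightarrow> carrier_vec p" using A unfolding c_def by auto
  have "det B = 0" unfolding B_def by (rule det_row_0[OF _ c]) (use qp in auto)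
  moreover have Bc: "B \<in> carrier_mat p p" unfolding B_def by auto
  ultimately obtain v where v: "v \<in> carrier_vec p" "v \<noteq> 0\<^sub>v p" "B *\<^sub>v v = 0\<^sub>v p"
    using det_0_iff_vec_prod_zero_field by blast
  have "A *\<^sub>v v = 0\<^sub>v q"
  proof (rule eq_vecI)
    fix i assume i: "i < dim_vec (0\<^sub>v q :: 'k vec)"
    hence iq: "i < q" by simp
    have "(B *\<^sub>v v) $ i = 0" using v(3) iq qp by simp
    moreover have "(B *\<^sub>v v) $ i = row A i \<bullet> v"
      using iq qp A unfolding B_def c_def by (auto simp: mult_mat_vec_def)
    ultimately show "(A *\<^sub>v v) $ i = (0\<^sub>v q) $ i" using iq A by auto
  qed (use A in auto)
  with inj v show False by auto
qed



lemma mat_vec_zero: "A \<in> carrier_mat q p \<Longrightarrow> A *\<^sub>v 0\<^sub>v p = (0\<^sub>v q :: 'k::field vec)"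
  by (rule eq_vecI) (auto simp: scalar_prod_def)

lemma surj_dim_le:
  fixes A :: "'k::field mat"
  assumes A: "A \<in> carrier_mat q p"
    and surj: "\<And>w. w \<in> carrier_vec q \<Longrightarrow> \<exists>u\<in>carrier_vec p. w = A *\<^sub>v u"
  shows "q \<le> p"
proof -
  define u where "u = (\<lambda>j. SOME u. u \<in> carrier_vec p \<and> unit_vec q j = A *\<^sub>v u)"
  have u: "u j \<in> carrier_vec p \<and> unit_vec q j = A *\<^sub>v u j" if "j < q" for j
    unfolding u_def by (rule someI_ex) (use surj[of "unit_vec q j"] that in auto)
  define B where "B = mat_of_cols p (map u [0..<q])"
  have B: "B \<in> carrier_mat p q" unfolding B_def by auto
  have AB: "A * B = 1\<^sub>m q"
  proof (rule eq_matI)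
    fix i j assume i: "i < dim_row (1\<^sub>m q :: 'k mat)" and j: "j < dim_col (1\<^sub>m q :: 'k mat)"
    have cB: "col B j = u j" using j u unfolding B_def by simp
    have "(A * B) $$ (i, j) = row A i \<bullet> col B j" using i j A B by simp
    also have "\<dots> = (A *\<^sub>v u j) $ i" using i A cB by simp
    also have "\<dots> = unit_vec q j $ i" using u[of j] j by simp
    finally show "(A * B) $$ (i, j) = 1\<^sub>m q $$ (i, j)" using i j by simp
  qed (use A B in auto)
  show ?thesis
  proof (rule inj_dim_le[OF B])
    fix v :: "'k vec" assume v: "v \<in> carrier_vec q" "B *\<^sub>v v = 0\<^sub>v p"
    have "v = (A * B) *\<^sub>v v" using AB v by simp
    also have "\<dots> = A *\<^sub>v (B *\<^sub>v v)" using A B v by (simp add: assoc_mult_mat_vec)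
    also have "\<dots> = 0\<^sub>v q" using v A by (simp add: mat_vec_zero)
    finally show "v = 0\<^sub>v q" .
  qed
qed

lemma sum_ind: "x \<le> D \<Longrightarrow> (\<Sum>t\<in>{1..D}. if t \<le> x then 1 else 0::nat) = x"
  by (induct D) (auto simp: le_Suc_eq)

lemma cone_zero: "(\<lambda>_. 0) \<in> cone_span H"
  unfolding cone_span_def by (rule CollectI, rule exI[of _ "{}"]) auto

lemma cone_base: "h \<in> H \<Longrightarrow> h \<in> cone_span H"
  unfolding cone_span_def by (rule CollectI, rule exI[of _ "{h}"], rule exI[of _ "\<lambda>_. 1"]) auto

lemma cone_scale: assumes "c \<ge> 0" "f \<in> cone_span H" shows "(\<lambda>i. c * f i) \<in> cone_span H"
proof -
  from assms(2) obtain T d where T: "finite T" "T \<subseteq> H" "\<forall>h\<in>T. d h \<ge> 0" "f = (\<lambda>i. \<Sum>h\<in>T. d h * h i)"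
    unfolding cone_span_def by auto
  show ?thesis unfolding cone_span_def
    by (rule CollectI, rule exI[of _ T], rule exI[of _ "\<lambda>h. c * d h"])
       (use T assms(1) in \<open>auto simp: sum_distrib_left mult.assoc\<close>)
qed

lemma cone_add: assumes "f \<in> cone_span H" "g \<in> cone_span H" shows "(\<lambda>i. f i + g i) \<in> cone_span H"
proof -
  from assms(1) obtain T1 c1 where T1: "finite T1" "T1 \<subseteq> H" "\<forall>h\<in>T1. c1 h \<ge> 0" "f = (\<lambda>i. \<Sum>h\<in>T1. c1 h * h i)"
    unfolding cone_span_def by auto
  from assms(2) obtain T2 c2 where T2: "finite T2" "T2 \<subseteq> H" "\<forall>h\<in>T2. c2 h \<ge> 0" "g = (\<lambda>i. \<Sum>h\<in>T2. c2 h * h i)"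
    unfolding cone_span_def by auto
  define c where "c h = (if h \<in> T1 then c1 h else 0) + (if h \<in> T2 then c2 h else 0)" for h
  have s1: "(\<Sum>h\<in>T1\<union>T2. (if h \<in> T1 then c1 h else 0) * h i) = (\<Sum>h\<in>T1. c1 h * h i)" for i
    by (subst sum.mono_neutral_right[of "T1\<union>T2" T1]) (use T1 T2 in auto)
  have s2: "(\<Sum>h\<in>T1\<union>T2. (if h \<in> T2 then c2 h else 0) * h i) = (\<Sum>h\<in>T2. c2 h * h i)" for i
    by (subst sum.mono_neutral_right[of "T1\<union>T2" T2]) (use T1 T2 in auto)
  have "(\<lambda>i. f i + g i) = (\<lambda>i. \<Sum>h\<in>T1\<union>T2. c h * h i)"
    unfolding c_def by (auto simp: distrib_right sum.distrib s1 s2 T1(4) T2(4))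
  thus ?thesis unfolding cone_span_def
    by (intro CollectI exI[of _ "T1\<union>T2"] exI[of _ c]) (use T1 T2 in \<open>auto simp: c_def\<close>)
qed

lemma cone_sum: assumes "finite I" "\<forall>t\<in>I. g t \<in> cone_span H"
  shows "(\<lambda>i. \<Sum>t\<in>I. g t i) \<in> cone_span H"
  using assms
proof (induction I rule: finite_induct)
  case empty then show ?case using cone_zero by simp
next
  case (insert x F)
  then show ?case using cone_add[of "g x" H "\<lambda>i. \<Sum>t\<in>F. g t i"] by simp
qed

lemma cone_sub: assumes "A \<subseteq> cone_span B" shows "cone_span A \<subseteq> cone_span B"
proof
  fix f assume "f \<in> cone_span A"
  then obtain T c where T: "finite T" "T \<subseteq> A" "\<forall>h\<in>T. c h \<ge> 0" "f = (\<lambda>i. \<Sum>h\<in>T. c h * h i)"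
    unfolding cone_span_def by auto
  show "f \<in> cone_span B" unfolding T(4)
    by (rule cone_sum[where g="\<lambda>h i. c h * h i", OF T(1)]) (use T assms cone_scale in blast)
qed



definition prev :: "(nat \<Rightarrow> nat) \<Rightarrow> nat \<Rightarrow> (nat \<Rightarrow> nat)" where
  "prev a i = a(i := a i - 1)"

lemma shift_prev: "a i \<noteq> 0 \<Longrightarrow> shift (prev a i) i = a"
  unfolding shift_def prev_def by auto
lemma prev_shift: "prev (shift a i) i = a"
  unfolding shift_def prev_def by auto
lemma prev_shift_ne: "i \<noteq> j \<Longrightarrow> prev (shift a j) i = shift (prev a i) j"
  unfolding shift_def prev_def by (auto simp: fun_eq_iff)
lemma shift_ne: "i \<noteq> j \<Longrightarrow> shift a j i = a i"
  unfolding shift_def by auto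
lemma shift_comm: "shift (shift a i) j = shift (shift a j) i"
  unfolding shift_def by (auto simp: fun_eq_iff)
lemma shift_deg: "a \<in> degrees n \<Longrightarrow> i < n \<Longrightarrow> shift a i \<in> degrees n"
  unfolding shift_def degrees_def by auto
lemma prev_deg: "a \<in> degrees n \<Longrightarrow> prev a i \<in> degrees n"
  unfolding prev_def degrees_def by auto
lemma zero_deg: "(\<lambda>_. 0) \<in> degrees n"
  unfolding degrees_def by auto

lemma gen0_props:
  assumes G: "graded_module n M" and g: "gen0 n M a v"
  shows "a \<in> degrees n \<and> v \<in> carrier_vec (dimf M a)"
  using g
proof induction
  case (mult a v i)
  then show ?case using G unfolding graded_module_def by (meson mult_mat_vec_carrier shift_deg)
qed (auto simp: zero_deg)

lemma gen0_surj:
  assumes G: "graded_module n M" and g: "gen0 n M b v"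
  shows "i < n \<Longrightarrow> b i \<noteq> 0 \<Longrightarrow> \<exists>u\<in>carrier_vec (dimf M (prev b i)). v = mulx M i (prev b i) *\<^sub>v u"
  using g
proof (induction arbitrary: i)
  case (base v) then show ?case by simp
next
  case (zero a)
  have "mulx M i (prev a i) \<in> carrier_mat (dimf M a) (dimf M (prev a i))"
    using G zero shift_prev[of a i] prev_deg[OF zero(1)] unfolding graded_module_def by metis
  then show ?case by (intro bexI[of _ "0\<^sub>v (dimf M (prev a i))"]) (auto simp: mat_vec_zero)
next
  case (add a v w)
  then obtain u1 u2 where u: "u1 \<in> carrier_vec (dimf M (prev a i))" "v = mulx M i (prev a i) *\<^sub>v u1"
    "u2 \<in> carrier_vec (dimf M (prev a i))" "w = mulx M i (prev a i) *\<^sub>v u2" by blast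
  have a: "a \<in> degrees n" using gen0_props[OF G add(1)] by simp
  have "mulx M i (prev a i) \<in> carrier_mat (dimf M a) (dimf M (prev a i))"
    using G add shift_prev[of a i] prev_deg[OF a] unfolding graded_module_def by metis
  then show ?case using u by (intro bexI[of _ "u1 + u2"]) (auto simp: mult_add_distrib_mat_vec)
next
  case (smult a v c)
  then obtain u where u: "u \<in> carrier_vec (dimf M (prev a i))" "v = mulx M i (prev a i) *\<^sub>v u" by blast
  have a: "a \<in> degrees n" using gen0_props[OF G smult(1)] by simp
  have "mulx M i (prev a i) \<in> carrier_mat (dimf M a) (dimf M (prev a i))"
    using G smult shift_prev[of a i] prev_deg[OF a] unfolding graded_module_def by metis
  then show ?case using u by (intro bexI[of _ "c \<cdot>\<^sub>v u"]) (auto simp: mult_mat_vec)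
next
  case (mult a v j)
  have av: "a \<in> degrees n" "v \<in> carrier_vec (dimf M a)" using gen0_props[OF G mult.hyps(1)] by auto
  show ?case
  proof (cases "i = j")
    case True
    then show ?thesis using av by (auto simp: prev_shift)
  next
    case False
    hence ai: "a i \<noteq> 0" using mult.prems(2) by (simp add: shift_ne)
    from mult.IH[OF mult.prems(1) ai] obtain u where u: "u \<in> carrier_vec (dimf M (prev a i))"
      "v = mulx M i (prev a i) *\<^sub>v u" by blast
    let ?p = "prev a i"
    have p: "?p \<in> degrees n" using prev_deg[OF av(1)] .
    have sp: "shift ?p i = a" using shift_prev[of a i, OF ai] .
    have cj: "mulx M j a \<in> carrier_mat (dimf M (shift a j)) (dimf M a)"
      using G av(1) mult.hyps(2) unfolding graded_module_def by auto
    have ci: "mulx M i ?p \<in> carrier_mat (dimf M a) (dimf M ?p)"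
      using G p mult.prems(1) sp unfolding graded_module_def by metis
    have cj': "mulx M j ?p \<in> carrier_mat (dimf M (shift ?p j)) (dimf M ?p)"
      using G p mult.hyps(2) unfolding graded_module_def by auto
    have ci': "mulx M i (shift ?p j) \<in> carrier_mat (dimf M (shift (shift ?p j) i)) (dimf M (shift ?p j))"
      using G shift_deg[OF p mult.hyps(2)] mult.prems(1) unfolding graded_module_def by auto
    have comm: "mulx M j (shift ?p i) * mulx M i ?p = mulx M i (shift ?p j) * mulx M j ?p"
      using G p mult.hyps(2) mult.prems(1) unfolding graded_module_def by auto
    have "mulx M j a *\<^sub>v v = (mulx M j a * mulx M i ?p) *\<^sub>v u"
      using u cj ci by (simp add: assoc_mult_mat_vec)
    also have "\<dots> = (mulx M i (shift ?p j) * mulx M j ?p) *\<^sub>v u" using comm sp by simp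
    also have "\<dots> = mulx M i (shift ?p j) *\<^sub>v (mulx M j ?p *\<^sub>v u)"
      using u cj' ci' by (simp add: assoc_mult_mat_vec)
    finally show ?thesis using prev_shift_ne[OF False, of a] cj' u
      by (intro bexI[of _ "mulx M j ?p *\<^sub>v u"]) auto
  qed
qed

lemma dim_shift_le:
  fixes M :: "'k::field grmod"
  assumes G: "graded_module n M" and Z: "generated_in_degree_zero n M"
    and a: "a \<in> degrees n" and i: "i < n"
  shows "dimf M (shift a i) \<le> dimf M a"
proof -
  have c: "mulx M i a \<in> carrier_mat (dimf M (shift a i)) (dimf M a)"
    using G a i unfolding graded_module_def by auto
  show ?thesis
  proof (rule surj_dim_le[OF c])
    fix w :: "'k vec" assume w: "w \<in> carrier_vec (dimf M (shift a i))"
    have g: "gen0 n M (shift a i) w" using Z w shift_deg[OF a i] unfolding generated_in_degree_zero_def by auto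
    have si: "shift a i i \<noteq> 0" by (simp add: shift_def)
    have "\<exists>u\<in>carrier_vec (dimf M (prev (shift a i) i)). w = mulx M i (prev (shift a i) i) *\<^sub>v u"
      using gen0_surj[OF G g i si] .
    thus "\<exists>u\<in>carrier_vec (dimf M a). w = mulx M i a *\<^sub>v u" by (simp only: prev_shift)
  qed
qed

lemma dim_shift_ge:
  fixes M :: "'k::field grmod"
  assumes G: "graded_module n M" and S: "squarefree_mod n M"
    and a: "a \<in> degrees n" and i: "i < n" and ai: "a i \<noteq> 0"
  shows "dimf M a \<le> dimf M (shift a i)"
proof -
  have c: "mulx M i a \<in> carrier_mat (dimf M (shift a i)) (dimf M a)"
    using G a i unfolding graded_module_def by auto
  have b: "bij_betw (\<lambda>v. mulx M i a *\<^sub>v v) (carrier_vec (dimf M a)) (carrier_vec (dimf M (shift a i)))"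
    using S a i ai unfolding squarefree_mod_def by auto
  show ?thesis
  proof (rule inj_dim_le[OF c])
    fix v assume v: "v \<in> carrier_vec (dimf M a)" "mulx M i a *\<^sub>v v = 0\<^sub>v (dimf M (shift a i))"
    have "mulx M i a *\<^sub>v 0\<^sub>v (dimf M a) = 0\<^sub>v (dimf M (shift a i))" using c by (simp add: mat_vec_zero)
    with v b show "v = 0\<^sub>v (dimf M a)" unfolding bij_betw_def inj_on_def by auto
  qed
qed

lemma mono_gen:
  fixes f :: "(nat \<Rightarrow> nat) \<Rightarrow> int"
  assumes a: "a \<in> degrees n" and le: "\<forall>j. a j \<le> b j" and b: "b \<in> degrees n"
    and step: "\<And>c i. c \<in> degrees n \<Longrightarrow> i < n \<Longrightarrow> (\<forall>j. a j \<le> c j) \<Longrightarrow> (\<forall>j. shift c i j \<le> b j)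
       \<Longrightarrow> f (shift c i) \<le> f c"
  shows "f b \<le> f a"
proof -
  have "\<And>e. e \<in> degrees n \<Longrightarrow> (\<forall>j. a j \<le> e j) \<Longrightarrow> (\<forall>j. e j \<le> b j) \<Longrightarrow> (\<Sum>j<n. e j - a j) = k \<Longrightarrow> f e \<le> f a" for k
  proof (induction k)
    case 0
    have "e = a"
    proof
      fix j show "e j = a j"
      proof (cases "j < n")
        case True thus ?thesis using 0 by (simp add: sum_eq_0_iff) (metis le_antisym le_refl lessThan_iff)
      next
        case False thus ?thesis using 0 a unfolding degrees_def by auto
      qed
    qed
    thus ?case by simp
  next
    case (Suc k e)
    have "\<exists>i<n. a i < e i"
    proof (rule ccontr)
      assume "\<not> ?thesis"
      hence "\<forall>j<n. e j - a j = 0" by auto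
      hence "(\<Sum>j<n. e j - a j) = 0" by simp
      with Suc show False by simp
    qed
    then obtain i where i: "i < n" "a i < e i" by blast
    let ?c = "prev e i"
    have bi: "e i \<noteq> 0" using i by simp
    have c: "?c \<in> degrees n" using prev_deg[OF Suc(2)] .
    have ac: "\<forall>j. a j \<le> ?c j" using Suc(3) i unfolding prev_def by auto
    have sc: "shift ?c i = e" using shift_prev[of e i, OF bi] .
    have "(\<Sum>j<n. e j - a j) = (\<Sum>j<n. ?c j - a j) + 1"
    proof -
      have "(\<Sum>j<n. e j - a j) = (\<Sum>j<n. (?c j - a j) + (if j = i then 1 else 0))"
        using i by (intro sum.cong) (auto simp: prev_def)
      also have "\<dots> = (\<Sum>j<n. ?c j - a j) + 1" using i by (simp add: sum.distrib)
      finally show ?thesis .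
    qed
    hence hk: "(\<Sum>j<n. ?c j - a j) = k" using Suc(5) by simp
    have ce: "\<forall>j. ?c j \<le> b j" using Suc(4) unfolding prev_def by (metis diff_le_self fun_upd_apply le_trans)
    from Suc.IH[OF c ac ce hk] have "f ?c \<le> f a" .
    moreover have "f e \<le> f ?c" using step[OF c i(1) ac] unfolding sc using Suc(4) by auto
    ultimately show ?case by simp
  qed
  then show ?thesis using b le by blast
qed



locale gm =
  fixes n :: nat and M :: "'k::field grmod"
  assumes G: "graded_module n M" and Z: "generated_in_degree_zero n M" and S: "squarefree_mod n M"
begin

lemma dim_mono: assumes "a \<in> degrees n" "b \<in> degrees n" "\<forall>j. a j \<le> b j"
  shows "dimf M b \<le> dimf M a"
proof -
  have "int (dimf M b) \<le> int (dimf M a)"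
    by (rule mono_gen[OF assms(1,3,2), where f="\<lambda>c. int (dimf M c)"])
       (use dim_shift_le[OF G Z] in auto)
  thus ?thesis by simp
qed

lemma dim_supp_le: assumes a: "a \<in> degrees n" and b: "b \<in> degrees n" and le: "\<forall>j. a j \<le> b j"
  and s: "supp a = supp b"
  shows "dimf M a \<le> dimf M b"
proof -
  have "- int (dimf M b) \<le> - int (dimf M a)"
  proof (rule mono_gen[OF a le b, where f="\<lambda>c. - int (dimf M c)"])
    fix c i assume c: "c \<in> degrees n" "i < n" "\<forall>j. a j \<le> c j" "\<forall>j. shift c i j \<le> b j"
    have "b i \<noteq> 0" using c(4)[rule_format, of i] by (simp add: shift_def)
    hence "a i \<noteq> 0" using s unfolding supp_def by auto
    hence "c i \<noteq> 0" using c(3)[rule_format, of i] by auto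
    thus "- int (dimf M (shift c i)) \<le> - int (dimf M c)" using dim_shift_ge[OF G S c(1,2)] by simp
  qed
  thus ?thesis by simp
qed

lemma dim_supp_eq: assumes a: "a \<in> degrees n" and b: "b \<in> degrees n" and s: "supp a = supp b"
  shows "dimf M a = dimf M b"
proof -
  define c where "c = (\<lambda>j. min (a j) (b j))"
  have c: "c \<in> degrees n" using a unfolding c_def degrees_def by auto
  have sc: "supp c = supp a" "supp c = supp b" using s unfolding supp_def c_def by auto
  have "dimf M c \<le> dimf M a" "dimf M c \<le> dimf M b"
    using dim_supp_le[OF c a _ sc(1)] dim_supp_le[OF c b _ sc(2)] unfolding c_def by auto
  moreover have "dimf M a \<le> dimf M c" "dimf M b \<le> dimf M c"
    using dim_mono[OF c a] dim_mono[OF c b] unfolding c_def by auto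
  ultimately show ?thesis by simp
qed

definition Dl :: "nat \<Rightarrow> nat set set" where
  "Dl t = {supp a | a. a \<in> degrees n \<and> t \<le> dimf M a}"

lemma SR_Dl: assumes a: "a \<in> degrees n" shows "SR_dim n (Dl t) a = (if t \<le> dimf M a then 1 else 0)"
proof -
  have "supp a \<in> Dl t \<longleftrightarrow> t \<le> dimf M a"
  proof
    assume "supp a \<in> Dl t"
    then obtain b where b: "supp a = supp b" "b \<in> degrees n" "t \<le> dimf M b" unfolding Dl_def by blast
    with dim_supp_eq[OF a b(2) b(1)] show "t \<le> dimf M a" by simp
  next
    assume "t \<le> dimf M a" thus "supp a \<in> Dl t" unfolding Dl_def using a by blast
  qed
  thus ?thesis using a unfolding SR_dim_def by simp
qed

lemma Dl_sc: assumes "t \<le> dimf M (\<lambda>_. 0)" shows "simplicial_complex n (Dl t)"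
  unfolding simplicial_complex_def
proof (intro conjI ballI allI impI)
  show "Dl t \<noteq> {}" using assms zero_deg unfolding Dl_def by blast
next
  fix F assume "F \<in> Dl t"
  then obtain a where a: "F = supp a" "a \<in> degrees n" unfolding Dl_def by blast
  show "F \<subseteq> {0..<n}"
  proof
    fix x assume "x \<in> F"
    hence "a x \<noteq> 0" using a unfolding supp_def by simp
    hence "\<not> n \<le> x" using a(2) unfolding degrees_def by auto
    thus "x \<in> {0..<n}" by simp
  qed
next
  fix F G assume F: "F \<in> Dl t" and GF: "G \<subseteq> F"
  then obtain b where b: "F = supp b" "b \<in> degrees n" "t \<le> dimf M b" unfolding Dl_def by auto
  define a where "a = (\<lambda>j. if j \<in> G then b j else 0)"
  have a: "a \<in> degrees n" using b(2) unfolding a_def degrees_def by auto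
  have sa: "supp a = G" using GF b(1) unfolding a_def supp_def by auto
  have "dimf M b \<le> dimf M a" using dim_mono[OF a b(2)] unfolding a_def by auto
  thus "G \<in> Dl t" unfolding Dl_def using a sa b(3) by auto
qed

lemma hilb_decomp:
  "hilb n M = (\<lambda>i. \<Sum>t\<in>{1..dimf M (\<lambda>_. 0)}. hilb n (stanley_reisner n (Dl t) :: 'k grmod) i)"
proof
  fix i
  let ?D = "dimf M (\<lambda>_. 0)"
  let ?S = "{a \<in> degrees n. (\<Sum>j<n. a j) = i}"
  have "(\<Sum>t\<in>{1..?D}. hilb n (stanley_reisner n (Dl t) :: 'k grmod) i)
      = real (\<Sum>t\<in>{1..?D}. \<Sum>a\<in>?S. SR_dim n (Dl t) a)"
    unfolding hilb_def stanley_reisner_def by simp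
  also have "\<dots> = real (\<Sum>a\<in>?S. \<Sum>t\<in>{1..?D}. SR_dim n (Dl t) a)"
    by (subst sum.swap) simp
  also have "\<dots> = real (\<Sum>a\<in>?S. dimf M a)"
  proof -
    have "(\<Sum>t\<in>{1..?D}. SR_dim n (Dl t) a) = dimf M a" if "a \<in> ?S" for a
    proof -
      have a: "a \<in> degrees n" using that by simp
      have "(\<Sum>t\<in>{1..?D}. SR_dim n (Dl t) a) = (\<Sum>t\<in>{1..?D}. if t \<le> dimf M a then 1 else 0)"
        using SR_Dl[OF a] by simp
      also have "\<dots> = dimf M a" using sum_ind dim_mono[OF zero_deg a] by auto
      finally show ?thesis .
    qed
    thus ?thesis by simp
  qed
  finally show "hilb n M i = (\<Sum>t\<in>{1..?D}. hilb n (stanley_reisner n (Dl t) :: 'k grmod) i)"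
    unfolding hilb_def by simp
qed

end



lemma SR_le1: "SR_dim n D a = 1 \<longleftrightarrow> a \<in> degrees n \<and> supp a \<in> D"
  unfolding SR_dim_def by simp
lemma SR_01: "SR_dim n D a = 0 \<or> SR_dim n D a = 1"
  unfolding SR_dim_def by simp

lemma supp_shift_sub: "supp a \<subseteq> supp (shift a i)"
  unfolding supp_def shift_def by auto
lemma supp_shift_eq: "a i \<noteq> 0 \<Longrightarrow> supp (shift a i) = supp a"
  unfolding supp_def shift_def by auto

lemma vec0_eq: "v \<in> carrier_vec 0 \<Longrightarrow> w \<in> carrier_vec 0 \<Longrightarrow> v = w"
  by (rule eq_vecI) auto
lemma mat0_eq: "A \<in> carrier_mat r c \<Longrightarrow> B \<in> carrier_mat r c \<Longrightarrow> (r = 0 \<or> c = 0) \<Longrightarrow> A = B"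
  by (rule eq_matI) auto

context
  fixes n :: nat and D :: "nat set set"
  assumes sc: "simplicial_complex n D"
begin

abbreviation "s \<equiv> SR_dim n D"
abbreviation (input) "SRM \<equiv> (stanley_reisner n D :: 'k::field grmod)"

lemma sr_dimf: "dimf (stanley_reisner n D) = s" unfolding stanley_reisner_def by simp
lemma sr_mulx: "mulx (stanley_reisner n D) i a = (if s a = 1 \<and> s (shift a i) = 1 then 1\<^sub>m 1
                     else 0\<^sub>m (s (shift a i)) (s a))" unfolding stanley_reisner_def by simp

lemma sr_carrier: "mulx (stanley_reisner n D :: 'k::field grmod) i a \<in> carrier_mat (s (shift a i)) (s a)"
  unfolding sr_mulx by auto

lemma sr_down: "s b = 1 \<Longrightarrow> a \<in> degrees n \<Longrightarrow> supp a \<subseteq> supp b \<Longrightarrow> s a = 1"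
  using sc unfolding SR_le1 simplicial_complex_def by blast

lemma sr_graded: "graded_module n (stanley_reisner n D :: 'k::field grmod)"
  unfolding graded_module_def
proof (intro conjI ballI allI impI)
  fix a i assume "a \<in> degrees n" "i < n"
  show "mulx (stanley_reisner n D :: 'k grmod) i a \<in> carrier_mat (dimf (stanley_reisner n D :: 'k grmod) (shift a i)) (dimf (stanley_reisner n D :: 'k grmod) a)"
    using sr_carrier unfolding sr_dimf by blast
next
  fix a i j assume a: "a \<in> degrees n" and i: "i < n" and j: "j < n"
  let ?X = "mulx (stanley_reisner n D :: 'k grmod)"
  let ?t = "shift (shift a i) j"
  have tc: "shift (shift a j) i = ?t" by (rule shift_comm[symmetric])
  have L: "?X j (shift a i) * ?X i a \<in> carrier_mat (s ?t) (s a)"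
    using sr_carrier[of j "shift a i"] sr_carrier[of i a] by (rule mult_carrier_mat)
  have R: "?X i (shift a j) * ?X j a \<in> carrier_mat (s ?t) (s a)"
    using mult_carrier_mat[OF sr_carrier[of i "shift a j"] sr_carrier[of j a]] tc by simp
  show "?X j (shift a i) * ?X i a = ?X i (shift a j) * ?X j a"
  proof (cases "s a = 1 \<and> s ?t = 1")
    case True
    have d1: "shift a i \<in> degrees n" "shift a j \<in> degrees n" using shift_deg a i j by auto
    have t1: "s ?t = 1" and a1: "s a = 1" using True by auto
    have t2: "s (shift (shift a j) i) = 1" using t1 tc by simp
    have si: "s (shift a i) = 1" using sr_down[OF t1 d1(1) supp_shift_sub[of "shift a i" j]] .
    have sj: "s (shift a j) = 1" using sr_down[OF t2 d1(2) supp_shift_sub[of "shift a j" i]] .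
    have e1: "?X j (shift a i) = 1\<^sub>m 1" unfolding sr_mulx using si t1 by simp
    have e2: "?X i a = 1\<^sub>m 1" unfolding sr_mulx using si a1 by simp
    have e3: "?X i (shift a j) = 1\<^sub>m 1" unfolding sr_mulx using sj t2 by simp
    have e4: "?X j a = 1\<^sub>m 1" unfolding sr_mulx using sj a1 by simp
    show ?thesis unfolding e1 e2 e3 e4 ..
  next
    case False
    hence "s ?t = 0 \<or> s a = 0" using SR_01 by metis
    thus ?thesis using mat0_eq[OF L R] by blast
  qed
qed

lemma sr_squarefree: "squarefree_mod n (stanley_reisner n D :: 'k::field grmod)"
  unfolding squarefree_mod_def
proof (intro ballI allI impI)
  fix a i assume a: "a \<in> degrees n" and i: "i < n" and ai: "a i \<noteq> 0"
  let ?X = "mulx (stanley_reisner n D :: 'k grmod) i a"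
  have eqs: "s (shift a i) = s a" using supp_shift_eq[of a i, OF ai] shift_deg[OF a i] a
    unfolding SR_dim_def by simp
  have id: "?X *\<^sub>v v = v" if v: "v \<in> carrier_vec (s a)" for v
  proof (cases "s a = 1")
    case True
    then show ?thesis using v eqs unfolding sr_mulx by simp
  next
    case False
    hence "s a = 0" using SR_01 by metis
    moreover have "?X *\<^sub>v v \<in> carrier_vec (s a)" using sr_carrier[of i a] eqs
      by (metis mult_mat_vec_carrier v)
    ultimately show ?thesis using v vec0_eq by metis
  qed
  have "bij_betw (\<lambda>v. v) (carrier_vec (s a)) (carrier_vec (s a) :: 'k vec set)" by (rule bij_betw_id[unfolded id_def])
  hence "bij_betw (\<lambda>v. ?X *\<^sub>v v) (carrier_vec (s a)) (carrier_vec (s a))"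
    by (rule bij_betw_cong[THEN iffD1, rotated]) (use id in auto)
  thus "bij_betw (\<lambda>v. ?X *\<^sub>v v) (carrier_vec (dimf (stanley_reisner n D :: 'k grmod) a))
          (carrier_vec (dimf (stanley_reisner n D :: 'k grmod) (shift a i)))"
    unfolding sr_dimf eqs .
qed

lemma sr_gen0: "generated_in_degree_zero n (stanley_reisner n D :: 'k::field grmod)"
  unfolding generated_in_degree_zero_def
proof -
  have H: "\<And>a v. a \<in> degrees n \<Longrightarrow> (\<Sum>j<n. a j) = k \<Longrightarrow> v \<in> carrier_vec (s a)
     \<Longrightarrow> gen0 n (stanley_reisner n D :: 'k grmod) a v" for k
  proof (induction k)
    case (0 a v)
    show ?case
    proof (cases "s a = 0")
      case True
      have "gen0 n (stanley_reisner n D :: 'k grmod) a (0\<^sub>v (dimf (stanley_reisner n D :: 'k grmod) a))"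
        by (rule gen0.zero[OF 0(1)])
      moreover have "v = 0\<^sub>v (s a)" using 0(3) True vec0_eq by (metis zero_carrier_vec)
      ultimately show ?thesis unfolding sr_dimf by simp
    next
      case False
      have "a = (\<lambda>_. 0)"
      proof
        fix j show "a j = 0"
          using 0(1,2) unfolding degrees_def by (cases "j < n") auto
      qed
      have "gen0 n (stanley_reisner n D :: 'k grmod) (\<lambda>_. 0) v"
        by (rule gen0.base) (use 0(3) \<open>a = (\<lambda>_. 0)\<close> in \<open>simp add: sr_dimf\<close>)
      thus ?thesis using \<open>a = (\<lambda>_. 0)\<close> by simp
    qed
  next
    case (Suc k a v)
    show ?case
    proof (cases "s a = 0")
      case True
      have "gen0 n (stanley_reisner n D :: 'k grmod) a (0\<^sub>v (dimf (stanley_reisner n D :: 'k grmod) a))"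
        by (rule gen0.zero[OF Suc(2)])
      moreover have "v = 0\<^sub>v (s a)" using Suc(4) True vec0_eq by (metis zero_carrier_vec)
      ultimately show ?thesis unfolding sr_dimf by simp
    next
      case False
      hence sa: "s a = 1" using SR_01 by metis
      obtain i where i: "i < n" "a i \<noteq> 0"
      proof -
        have "\<not> (\<forall>j<n. a j = 0)"
        proof
          assume "\<forall>j<n. a j = 0" hence "(\<Sum>j<n. a j) = 0" by simp
          with Suc(3) show False by simp
        qed
        thus ?thesis using that by auto
      qed
      let ?b = "prev a i"
      have b: "?b \<in> degrees n" using prev_deg[OF Suc(2)] .
      have sb: "shift ?b i = a" using shift_prev[of a i, OF i(2)] .
      have "supp ?b \<subseteq> supp a" unfolding supp_def prev_def by auto
      hence sb1: "s ?b = 1" using sr_down[OF sa b] by blast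
      have "(\<Sum>j<n. a j) = (\<Sum>j<n. ?b j + (if j = i then 1 else 0))"
        using i by (intro sum.cong) (auto simp: prev_def)
      also have "\<dots> = (\<Sum>j<n. ?b j) + 1" using i by (simp add: sum.distrib)
      finally have "(\<Sum>j<n. ?b j) = k" using Suc(3) by simp
      hence g: "gen0 n (stanley_reisner n D :: 'k grmod) ?b v" using Suc.IH[OF b] Suc(4) sa sb1 by simp
      have "gen0 n (stanley_reisner n D :: 'k grmod) (shift ?b i)
             (mulx (stanley_reisner n D :: 'k grmod) i ?b *\<^sub>v v)"
        by (rule gen0.mult[OF g i(1)])
      moreover have "mulx (stanley_reisner n D :: 'k grmod) i ?b *\<^sub>v v = v"
        using sb sb1 sa Suc(4) unfolding sr_mulx by simp
      ultimately show ?thesis using sb by simp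
    qed
  qed
  show "\<forall>a\<in>degrees n. \<forall>v\<in>carrier_vec (dimf (stanley_reisner n D :: 'k grmod) a).
          gen0 n (stanley_reisner n D :: 'k grmod) a v" unfolding sr_dimf
  proof (intro ballI)
    fix a and v :: "'k vec" assume "a \<in> degrees n" "v \<in> carrier_vec (s a)"
    thus "gen0 n (stanley_reisner n D :: 'k grmod) a v" by (rule H[OF _ refl])
  qed
qed

end

theorem corollary4p12:
  fixes n :: nat
  shows "cone_span {hilb n M | M :: 'k::field grmod.
            graded_module n M \<and> squarefree_mod n M \<and> generated_in_degree_zero n M}
       = cone_span {hilb n (stanley_reisner n \<Delta> :: 'k grmod) | \<Delta>. simplicial_complex n \<Delta>}"
    (is "cone_span ?A = cone_span ?B")
proof
  show "cone_span ?A \<subseteq> cone_span ?B"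
  proof (rule cone_sub, rule subsetI)
    fix h assume "h \<in> ?A"
    then obtain M :: "'k grmod" where M: "h = hilb n M" "graded_module n M" "squarefree_mod n M"
      "generated_in_degree_zero n M" by blast
    interpret gm n M using M by unfold_locales auto
    have "\<forall>t\<in>{1..dimf M (\<lambda>_. 0)}. hilb n (stanley_reisner n (Dl t) :: 'k grmod) \<in> cone_span ?B"
    proof
      fix t assume "t \<in> {1..dimf M (\<lambda>_. 0)}"
      hence "simplicial_complex n (Dl t)" using Dl_sc by simp
      hence "hilb n (stanley_reisner n (Dl t) :: 'k grmod) \<in> ?B" by blast
      thus "hilb n (stanley_reisner n (Dl t) :: 'k grmod) \<in> cone_span ?B" by (rule cone_base)
    qed
    from cone_sum[OF _ this] show "h \<in> cone_span ?B" unfolding M(1) hilb_decomp by simp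
  qed
next
  show "cone_span ?B \<subseteq> cone_span ?A"
  proof (rule cone_sub, rule subsetI)
    fix h assume "h \<in> ?B"
    then obtain D where D: "h = hilb n (stanley_reisner n D :: 'k grmod)" "simplicial_complex n D" by blast
    have "h \<in> ?A" unfolding D(1) using sr_graded[OF D(2)] sr_squarefree[OF D(2)] sr_gen0[OF D(2)]
      by blast
    thus "h \<in> cone_span ?A" by (rule cone_base)
  qed
qed

end
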